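(* Let $A$ be a unital $\mathrm{C}^*$-algebra, $\rho\in\mathcal{R}(A)$, $a\in A$, $\xi\in\mathcal{H}_A$ and $\epsilon>0$. Then the set \[ U(\rho\mid a,\xi,\epsilon)=\{[\rho'] : \rho'\in\mathcal{R}(A),\ \|(\rho-\rho')(a)\xi\|<\epsilon\} \] is open in $\hat{A}=\mathcal{R}(A)/\!\sim$.
   Context: Let $\mathcal{H}_A$ be a fixed Hilbert space of dimension equal to the cardinal $\kappa$ of a dense subset of $A$. A railway representation of $A$ is a representation on $\mathcal{H}_A$ that is unitarily equivalent to the $\kappa$-fold ampliation of some irreducible representation of $A$. $\mathcal{R}(A)$ denotes the set of all railway representations of $A$ on $\mathcal{H}_A$ with the topology of pointwise convergence relative to the strong operator topology, $\sim$ denotes unitary equivalence of representations, and $\hat{A}=\mathcal{R}(A)/\!\sim$ carries the quotient topology (this is canonically homeomorphic to the Fell spectrum of $A$). *)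

theory Defs
  imports "HOL-Analysis.Analysis"
begin

text \<open>A unital C*-algebra is modelled on a type 'a which is a real unital Banach algebra
 (class real_normed_algebra_1 and banach: norm of 1 is 1, submultiplicative norm,
 completeness), together with a complex scalar multiplication smul extending the real one
 and an involution st, satisfying the C*-identity.\<close>

definition unital_cstar_algebra ::
  "(complex \<Rightarrow> 'a::{real_normed_algebra_1,banach} \<Rightarrow> 'a) \<Rightarrow> ('a \<Rightarrow> 'a) \<Rightarrow> bool" where
  "unital_cstar_algebra smul st \<longleftrightarrow>
     (\<forall>r x. smul (complex_of_real r) x = scaleR r x) \<and>
     (\<forall>c d x. smul (c * d) x = smul c (smul d x)) \<and>
     (\<forall>c d x. smul (c + d) x = smul c x + smul d x) \<and>
     (\<forall>c x y. smul c (x + y) = smul c x + smul c y) \<and>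
     (\<forall>c x y. smul c (x * y) = smul c x * y \<and> smul c (x * y) = x * smul c y) \<and>
     (\<forall>c x. norm (smul c x) = cmod c * norm x) \<and>
     (\<forall>x. st (st x) = x) \<and>
     (\<forall>x y. st (x + y) = st x + st y) \<and>
     (\<forall>c x. st (smul c x) = smul (cnj c) (st x)) \<and>
     (\<forall>x y. st (x * y) = st y * st x) \<and>
     (\<forall>x. norm (st x * x) = (norm x)\<^sup>2)"

text \<open>D is a dense subset of A of minimal cardinality (cardinality = density character).\<close>

definition minimal_dense :: "'a::metric_space set \<Rightarrow> bool" where
  "minimal_dense D \<longleftrightarrow> closure D = UNIV \<and>
     (\<forall>E. closure E = UNIV \<longrightarrow> (\<exists>f::'a \<Rightarrow> 'a. inj_on f D \<and> f ` D \<subseteq> E))"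

definition l2 :: "'i set \<Rightarrow> ('i \<Rightarrow> complex) set" where
  "l2 I = {f. (\<forall>i. i \<notin> I \<longrightarrow> f i = 0) \<and> (\<lambda>i. (cmod (f i))\<^sup>2) summable_on I}"

definition l2inner :: "'i set \<Rightarrow> ('i \<Rightarrow> complex) \<Rightarrow> ('i \<Rightarrow> complex) \<Rightarrow> complex" where
  "l2inner I f g = (\<Sum>\<^sub>\<infinity>i\<in>I. cnj (f i) * g i)"

definition l2norm :: "'i set \<Rightarrow> ('i \<Rightarrow> complex) \<Rightarrow> real" where
  "l2norm I f = sqrt (\<Sum>\<^sub>\<infinity>i\<in>I. (cmod (f i))\<^sup>2)"

text \<open>Bounded linear operators on l2(I) (normalised to be 0 off l2(I)).\<close>

definition bounded_op :: "'i set \<Rightarrow> (('i \<Rightarrow> complex) \<Rightarrow> ('i \<Rightarrow> complex)) \<Rightarrow> bool" where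
  "bounded_op I T \<longleftrightarrow>
     (\<forall>f\<in>l2 I. T f \<in> l2 I) \<and>
     (\<forall>f. f \<notin> l2 I \<longrightarrow> T f = (\<lambda>i. 0)) \<and>
     (\<forall>f\<in>l2 I. \<forall>g\<in>l2 I. T (\<lambda>i. f i + g i) = (\<lambda>i. T f i + T g i)) \<and>
     (\<forall>c. \<forall>f\<in>l2 I. T (\<lambda>i. c * f i) = (\<lambda>i. c * T f i)) \<and>
     (\<exists>C. \<forall>f\<in>l2 I. l2norm I (T f) \<le> C * l2norm I f)"

definition is_rep ::
  "(complex \<Rightarrow> 'a::{real_normed_algebra_1,banach} \<Rightarrow> 'a) \<Rightarrow> ('a \<Rightarrow> 'a) \<Rightarrow> 'i set \<Rightarrow>
   ('a \<Rightarrow> ('i \<Rightarrow> complex) \<Rightarrow> ('i \<Rightarrow> complex)) \<Rightarrow> bool" where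
  "is_rep smul st I \<pi> \<longleftrightarrow>
     (\<forall>a. bounded_op I (\<pi> a)) \<and>
     (\<forall>a b. \<forall>f\<in>l2 I. \<pi> (a + b) f = (\<lambda>i. \<pi> a f i + \<pi> b f i)) \<and>
     (\<forall>c a. \<forall>f\<in>l2 I. \<pi> (smul c a) f = (\<lambda>i. c * \<pi> a f i)) \<and>
     (\<forall>a b. \<forall>f\<in>l2 I. \<pi> (a * b) f = \<pi> a (\<pi> b f)) \<and>
     (\<forall>a. \<forall>f\<in>l2 I. \<forall>g\<in>l2 I. l2inner I (\<pi> (st a) f) g = l2inner I f (\<pi> a g))"

definition closed_subspace :: "'i set \<Rightarrow> ('i \<Rightarrow> complex) set \<Rightarrow> bool" where
  "closed_subspace I M \<longleftrightarrow> M \<subseteq> l2 I \<and> (\<lambda>i. 0) \<in> M \<and>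
     (\<forall>f\<in>M. \<forall>g\<in>M. (\<lambda>i. f i + g i) \<in> M) \<and>
     (\<forall>c. \<forall>f\<in>M. (\<lambda>i. c * f i) \<in> M) \<and>
     (\<forall>x f. (\<forall>n. x n \<in> M) \<and> f \<in> l2 I \<and>
            (\<lambda>n. l2norm I (\<lambda>i. x n i - f i)) \<longlonglongrightarrow> 0 \<longrightarrow> f \<in> M)"

definition irreducible_rep ::
  "(complex \<Rightarrow> 'a::{real_normed_algebra_1,banach} \<Rightarrow> 'a) \<Rightarrow> ('a \<Rightarrow> 'a) \<Rightarrow> 'i set \<Rightarrow>
   ('a \<Rightarrow> ('i \<Rightarrow> complex) \<Rightarrow> ('i \<Rightarrow> complex)) \<Rightarrow> bool" where
  "irreducible_rep smul st I \<sigma> \<longleftrightarrow> is_rep smul st I \<sigma> \<and>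
     (\<exists>a. \<exists>f\<in>l2 I. \<sigma> a f \<noteq> (\<lambda>i. 0)) \<and>
     (\<forall>M. closed_subspace I M \<and> (\<forall>a. \<forall>f\<in>M. \<sigma> a f \<in> M) \<longrightarrow>
          M = {\<lambda>i. 0} \<or> M = l2 I)"

definition unitary_op :: "'i set \<Rightarrow> 'k set \<Rightarrow> (('i \<Rightarrow> complex) \<Rightarrow> ('k \<Rightarrow> complex)) \<Rightarrow> bool" where
  "unitary_op I K U \<longleftrightarrow> U ` l2 I = l2 K \<and>
     (\<forall>f\<in>l2 I. \<forall>g\<in>l2 I. U (\<lambda>i. f i + g i) = (\<lambda>k. U f k + U g k)) \<and>
     (\<forall>c. \<forall>f\<in>l2 I. U (\<lambda>i. c * f i) = (\<lambda>k. c * U f k)) \<and>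
     (\<forall>f\<in>l2 I. \<forall>g\<in>l2 I. l2inner K (U f) (U g) = l2inner I f g)"

text \<open>The D-fold ampliation of a representation sigma on l2(J): a representation on
  l2(D x J) = l2(D) tensor l2(J).\<close>

definition ampliation ::
  "'d set \<Rightarrow> 'j set \<Rightarrow> ('a \<Rightarrow> ('j \<Rightarrow> complex) \<Rightarrow> ('j \<Rightarrow> complex)) \<Rightarrow>
   'a \<Rightarrow> ('d \<times> 'j \<Rightarrow> complex) \<Rightarrow> ('d \<times> 'j \<Rightarrow> complex)" where
  "ampliation D J \<sigma> a f = (\<lambda>(d, j). if d \<in> D \<and> j \<in> J then \<sigma> a (\<lambda>j'. f (d, j')) j else 0)"

text \<open>H_A = l2(D), where D is a minimal dense subset of A. Irreducible representations
  are taken on spaces l2(J) with J a subset of A (every irreducible representation has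
  Hilbert dimension at most the density character of A, so this is no restriction).\<close>

definition railway ::
  "(complex \<Rightarrow> 'a::{real_normed_algebra_1,banach} \<Rightarrow> 'a) \<Rightarrow> ('a \<Rightarrow> 'a) \<Rightarrow> 'a set \<Rightarrow>
   ('a \<Rightarrow> ('a \<Rightarrow> complex) \<Rightarrow> ('a \<Rightarrow> complex)) set" where
  "railway smul st D = {\<pi>. is_rep smul st D \<pi> \<and>
     (\<exists>(J::'a set) \<sigma> (U :: ('a \<Rightarrow> complex) \<Rightarrow> ('a \<times> 'a \<Rightarrow> complex)).
        irreducible_rep smul st J \<sigma> \<and> unitary_op D (D \<times> J) U \<and>
        (\<forall>a. \<forall>f\<in>l2 D. U (\<pi> a f) = ampliation D J \<sigma> a (U f)))}"

text \<open>Topology of pointwise convergence relative to the strong operator topology.\<close>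

definition railway_topology ::
  "(complex \<Rightarrow> 'a::{real_normed_algebra_1,banach} \<Rightarrow> 'a) \<Rightarrow> ('a \<Rightarrow> 'a) \<Rightarrow> 'a set \<Rightarrow>
   ('a \<Rightarrow> ('a \<Rightarrow> complex) \<Rightarrow> ('a \<Rightarrow> complex)) topology" where
  "railway_topology smul st D = topology_generated_by
     {{\<pi>' \<in> railway smul st D. l2norm D (\<lambda>i. \<pi>' a \<xi> i - \<pi> a \<xi> i) < e} | \<pi> a \<xi> e.
        \<pi> \<in> railway smul st D \<and> \<xi> \<in> l2 D \<and> e > 0}"

definition unitarily_equiv ::
  "'a set \<Rightarrow> ('b \<Rightarrow> ('a \<Rightarrow> complex) \<Rightarrow> ('a \<Rightarrow> complex)) \<Rightarrow>
   ('b \<Rightarrow> ('a \<Rightarrow> complex) \<Rightarrow> ('a \<Rightarrow> complex)) \<Rightarrow> bool" where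
  "unitarily_equiv D \<pi> \<pi>' \<longleftrightarrow> (\<exists>U. unitary_op D D U \<and>
     (\<forall>a. \<forall>f\<in>l2 D. U (\<pi> a f) = \<pi>' a (U f)))"

definition rclass ::
  "(complex \<Rightarrow> 'a::{real_normed_algebra_1,banach} \<Rightarrow> 'a) \<Rightarrow> ('a \<Rightarrow> 'a) \<Rightarrow> 'a set \<Rightarrow>
   ('a \<Rightarrow> ('a \<Rightarrow> complex) \<Rightarrow> ('a \<Rightarrow> complex)) \<Rightarrow>
   ('a \<Rightarrow> ('a \<Rightarrow> complex) \<Rightarrow> ('a \<Rightarrow> complex)) set" where
  "rclass smul st D \<rho> = {\<rho>' \<in> railway smul st D. unitarily_equiv D \<rho> \<rho>'}"

text \<open>Open sets of the quotient topology on A-hat = R(A)/~.\<close>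

definition openin_spectrum ::
  "(complex \<Rightarrow> 'a::{real_normed_algebra_1,banach} \<Rightarrow> 'a) \<Rightarrow> ('a \<Rightarrow> 'a) \<Rightarrow> 'a set \<Rightarrow>
   ('a \<Rightarrow> ('a \<Rightarrow> complex) \<Rightarrow> ('a \<Rightarrow> complex)) set set \<Rightarrow> bool" where
  "openin_spectrum smul st D V \<longleftrightarrow>
     V \<subseteq> rclass smul st D ` railway smul st D \<and>
     openin (railway_topology smul st D) {\<rho> \<in> railway smul st D. rclass smul st D \<rho> \<in> V}"

end

theory Submission imports Defs begin

lemma l2_sq_summable: "f \<in> l2 I \<Longrightarrow> (\<lambda>i. (cmod (f i))\<^sup>2) summable_on I"
  by (simp add: l2_def)

lemma l2_zero_out: "f \<in> l2 I \<Longrightarrow> i \<notin> I \<Longrightarrow> f i = 0"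
  by (simp add: l2_def)

lemma cmod_add_sq_le: "(cmod (x + y))\<^sup>2 \<le> 2 * (cmod x)\<^sup>2 + 2 * (cmod y)\<^sup>2"
proof -
  have "cmod (x+y) \<le> cmod x + cmod y" by (rule norm_triangle_ineq)
  hence "(cmod (x+y))\<^sup>2 \<le> (cmod x + cmod y)\<^sup>2" by (simp add: power_mono)
  also have "\<dots> \<le> 2 * (cmod x)\<^sup>2 + 2 * (cmod y)\<^sup>2"
  proof -
    have "0 \<le> (cmod x - cmod y)\<^sup>2" by simp
    thus ?thesis unfolding power2_sum power2_diff by linarith
  qed
  finally show ?thesis .
qed

lemma l2_add: assumes "f \<in> l2 I" "g \<in> l2 I" shows "(\<lambda>i. f i + g i) \<in> l2 I"
proof -
  have s: "(\<lambda>i. 2 * (cmod (f i))\<^sup>2 + 2 * (cmod (g i))\<^sup>2) summable_on I"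
    using assms by (intro summable_on_add summable_on_cmult_right) (auto simp: l2_def)
  have "(\<lambda>i. (cmod (f i + g i))\<^sup>2) summable_on I"
    by (rule summable_on_comparison_test[OF s], rule cmod_add_sq_le, simp)
  thus ?thesis using assms by (auto simp: l2_def)
qed

lemma l2_scale: assumes "f \<in> l2 I" shows "(\<lambda>i. c * f i) \<in> l2 I"
proof -
  have "(\<lambda>i. (cmod c)\<^sup>2 * (cmod (f i))\<^sup>2) summable_on I"
    using assms by (intro summable_on_cmult_right) (auto simp: l2_def)
  thus ?thesis using assms by (auto simp: l2_def norm_mult power_mult_distrib)
qed

lemma l2_diff: assumes "f \<in> l2 I" "g \<in> l2 I" shows "(\<lambda>i. f i - g i) \<in> l2 I"
  using l2_add[OF assms(1) l2_scale[OF assms(2), of "-1"]] by simp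

lemma l2_zero: "(\<lambda>i. 0) \<in> l2 I" by (simp add: l2_def)

lemma l2norm_triangle:
  assumes "f \<in> l2 I" "g \<in> l2 I"
  shows "l2norm I (\<lambda>i. f i + g i) \<le> l2norm I f + l2norm I g"
proof -
  let ?h = "\<lambda>i. (cmod (f i + g i))\<^sup>2"
  have hs: "?h summable_on I" using l2_add[OF assms] by (simp add: l2_def)
  have "infsum ?h I \<le> (l2norm I f + l2norm I g)\<^sup>2"
  proof (rule infsum_le_finite_sums[OF hs])
    fix F assume F: "finite F" "F \<subseteq> I"
    have 1: "L2_set (\<lambda>i. cmod (f i + g i)) F \<le> L2_set (\<lambda>i. cmod (f i) + cmod (g i)) F"
      by (rule L2_set_mono) (auto intro: norm_triangle_ineq)
    have 2: "L2_set (\<lambda>i. cmod (f i) + cmod (g i)) F \<le> L2_set (\<lambda>i. cmod (f i)) F + L2_set (\<lambda>i. cmod (g i)) F"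
      by (rule L2_set_triangle_ineq)
    have 3: "L2_set (\<lambda>i. cmod (f i)) F \<le> l2norm I f"
      unfolding L2_set_def l2norm_def
      apply (rule real_sqrt_le_mono, rule finite_sum_le_infsum)
      using F assms by (auto simp: l2_def)
    have 4: "L2_set (\<lambda>i. cmod (g i)) F \<le> l2norm I g"
      unfolding L2_set_def l2norm_def
      apply (rule real_sqrt_le_mono, rule finite_sum_le_infsum)
      using F assms by (auto simp: l2_def)
    have le: "L2_set (\<lambda>i. cmod (f i + g i)) F \<le> l2norm I f + l2norm I g"
      using 1 2 3 4 by linarith
    have "sum ?h F = (L2_set (\<lambda>i. cmod (f i + g i)) F)\<^sup>2"
      unfolding L2_set_def by (simp add: sum_nonneg)
    also have "\<dots> \<le> (l2norm I f + l2norm I g)\<^sup>2"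
      using le by (intro power_mono) auto
    finally show "sum ?h F \<le> (l2norm I f + l2norm I g)\<^sup>2" .
  qed
  hence "sqrt (infsum ?h I) \<le> sqrt ((l2norm I f + l2norm I g)\<^sup>2)" by (rule real_sqrt_le_mono)
  also have "\<dots> = l2norm I f + l2norm I g"
    by (simp add: l2norm_def infsum_nonneg add_nonneg_nonneg)
  finally show ?thesis by (simp add: l2norm_def)
qed

lemma l2norm_triangle_diff:
  assumes "x \<in> l2 I" "y \<in> l2 I" "z \<in> l2 I"
  shows "l2norm I (\<lambda>i. x i - z i) \<le> l2norm I (\<lambda>i. x i - y i) + l2norm I (\<lambda>i. y i - z i)"
  using l2norm_triangle[OF l2_diff[OF assms(1,2)] l2_diff[OF assms(2,3)]] by simp

lemma l2inner_self: assumes "f \<in> l2 I"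
  shows "l2inner I f f = complex_of_real ((l2norm I f)\<^sup>2)"
proof -
  have e: "cnj (f i) * f i = complex_of_real ((cmod (f i))\<^sup>2)" for i
    using complex_norm_square[of "f i"] by (simp add: mult.commute)
  have "l2inner I f f = infsum (\<lambda>i. complex_of_real ((cmod (f i))\<^sup>2)) I"
    by (simp add: l2inner_def e)
  also have "\<dots> = complex_of_real (infsum (\<lambda>i. (cmod (f i))\<^sup>2) I)"
    using has_sum_of_real[OF has_sum_infsum[OF l2_sq_summable[OF assms]]]
    by (rule infsumI)
  also have "infsum (\<lambda>i. (cmod (f i))\<^sup>2) I = (l2norm I f)\<^sup>2"
    by (simp add: l2norm_def infsum_nonneg)
  finally show ?thesis .
qed

lemma l2norm_nonneg: "l2norm I f \<ge> 0"
  by (simp add: l2norm_def infsum_nonneg)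

lemma l2norm_eq0: assumes "f \<in> l2 I" "l2norm I f = 0" shows "f = (\<lambda>i. 0)"
proof
  fix i show "f i = 0"
  proof (cases "i \<in> I")
    case True
    have "infsum (\<lambda>i. (cmod (f i))\<^sup>2) I \<le> 0"
      using assms(2) by (simp add: l2norm_def infsum_nonneg)
    from nonneg_infsum_le_0D[OF this l2_sq_summable[OF assms(1)] _ True] show ?thesis by simp
  qed (use assms in \<open>simp add: l2_def\<close>)
qed


lemma l2norm_zero[simp]: "l2norm I (\<lambda>i. 0) = 0"
  by (simp add: l2norm_def)

lemma l2norm_commute: "l2norm I (\<lambda>i. x i - y i) = l2norm I (\<lambda>i. y i - x i)"
  by (simp add: l2norm_def norm_minus_commute)

lemma unitary_l2: "unitary_op I K U \<Longrightarrow> f \<in> l2 I \<Longrightarrow> U f \<in> l2 K"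
  by (auto simp: unitary_op_def)

lemma unitary_add: "unitary_op I K U \<Longrightarrow> f \<in> l2 I \<Longrightarrow> g \<in> l2 I \<Longrightarrow>
    U (\<lambda>i. f i + g i) = (\<lambda>k. U f k + U g k)"
  by (auto simp: unitary_op_def)

lemma unitary_scale: "unitary_op I K U \<Longrightarrow> f \<in> l2 I \<Longrightarrow>
    U (\<lambda>i. c * f i) = (\<lambda>k. c * U f k)"
  by (auto simp: unitary_op_def)

lemma unitary_inner: "unitary_op I K U \<Longrightarrow> f \<in> l2 I \<Longrightarrow> g \<in> l2 I \<Longrightarrow>
    l2inner K (U f) (U g) = l2inner I f g"
  by (auto simp: unitary_op_def)

lemma unitary_diff: assumes "unitary_op I K U" "f \<in> l2 I" "g \<in> l2 I"
  shows "U (\<lambda>i. f i - g i) = (\<lambda>k. U f k - U g k)"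
proof -
  have "U (\<lambda>i. f i - g i) = U (\<lambda>i. f i + (\<lambda>i. (-1) * g i) i)" by simp
  also have "\<dots> = (\<lambda>k. U f k + U (\<lambda>i. (-1) * g i) k)"
    by (rule unitary_add[OF assms(1,2) l2_scale[OF assms(3)]])
  also have "\<dots> = (\<lambda>k. U f k - U g k)"
    using unitary_scale[OF assms(1,3), of "-1"] by simp
  finally show ?thesis .
qed

lemma unitary_norm: assumes "unitary_op I K U" "f \<in> l2 I"
  shows "l2norm K (U f) = l2norm I f"
proof -
  have "complex_of_real ((l2norm K (U f))\<^sup>2) = complex_of_real ((l2norm I f)\<^sup>2)"
    using l2inner_self[OF unitary_l2[OF assms]] l2inner_self[OF assms(2)]
      unitary_inner[OF assms(1,2,2)] by simp
  hence "(l2norm K (U f))\<^sup>2 = (l2norm I f)\<^sup>2" by (simp only: of_real_eq_iff)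
  thus ?thesis using l2norm_nonneg[of K "U f"] l2norm_nonneg[of I f]
    by (simp add: power2_eq_iff_nonneg)
qed

lemma unitary_inj: assumes "unitary_op I K U" shows "inj_on U (l2 I)"
proof (rule inj_onI)
  fix f g assume f: "f \<in> l2 I" and g: "g \<in> l2 I" and e: "U f = U g"
  have "l2norm I (\<lambda>i. f i - g i) = l2norm K (U (\<lambda>i. f i - g i))"
    using unitary_norm[OF assms l2_diff[OF f g]] by simp
  also have "\<dots> = 0" using unitary_diff[OF assms f g] e by simp
  finally have z: "(\<lambda>i. f i - g i) = (\<lambda>i. 0)" by (rule l2norm_eq0[OF l2_diff[OF f g]])
  show "f = g"
  proof
    fix i show "f i = g i" using fun_cong[OF z, of i] by simp
  qed
qed

definition uinv :: "'i set \<Rightarrow> (('i \<Rightarrow> complex) \<Rightarrow> ('k \<Rightarrow> complex)) \<Rightarrow> ('k \<Rightarrow> complex) \<Rightarrow> ('i \<Rightarrow> complex)"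
  where "uinv I U = inv_into (l2 I) U"

lemma uinv_l2: assumes "unitary_op I K U" "x \<in> l2 K" shows "uinv I U x \<in> l2 I"
proof -
  have "x \<in> U ` l2 I" using assms by (simp add: unitary_op_def)
  thus ?thesis unfolding uinv_def by (rule inv_into_into)
qed

lemma uinv_right: assumes "unitary_op I K U" "x \<in> l2 K" shows "U (uinv I U x) = x"
proof -
  have "x \<in> U ` l2 I" using assms by (simp add: unitary_op_def)
  thus ?thesis unfolding uinv_def by (rule f_inv_into_f)
qed

lemma uinv_left: "unitary_op I K U \<Longrightarrow> f \<in> l2 I \<Longrightarrow> uinv I U (U f) = f"
  unfolding uinv_def by (rule inv_into_f_f[OF unitary_inj])

lemma unitary_uinv: assumes U: "unitary_op I K U" shows "unitary_op K I (uinv I U)"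
  unfolding unitary_op_def
proof (intro conjI ballI allI)
  show "uinv I U ` l2 K = l2 I"
  proof
    show "uinv I U ` l2 K \<subseteq> l2 I" using uinv_l2[OF U] by auto
    show "l2 I \<subseteq> uinv I U ` l2 K"
    proof
      fix f assume "f \<in> l2 I"
      hence "f = uinv I U (U f)" "U f \<in> l2 K" using uinv_left[OF U] unitary_l2[OF U] by auto
      thus "f \<in> uinv I U ` l2 K" by (rule image_eqI)
    qed
  qed
next
  fix x y assume x: "x \<in> l2 K" and y: "y \<in> l2 K"
  have "(\<lambda>i. x i + y i) = U (\<lambda>i. uinv I U x i + uinv I U y i)"
    using unitary_add[OF U uinv_l2[OF U x] uinv_l2[OF U y]] uinv_right[OF U x] uinv_right[OF U y]
    by simp
  hence "uinv I U (\<lambda>i. x i + y i) = uinv I U (U (\<lambda>i. uinv I U x i + uinv I U y i))" by simp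
  also have "\<dots> = (\<lambda>i. uinv I U x i + uinv I U y i)"
    by (rule uinv_left[OF U l2_add[OF uinv_l2[OF U x] uinv_l2[OF U y]]])
  finally show "uinv I U (\<lambda>i. x i + y i) = (\<lambda>k. uinv I U x k + uinv I U y k)" .
  show "l2inner I (uinv I U x) (uinv I U y) = l2inner K x y"
    using unitary_inner[OF U uinv_l2[OF U x] uinv_l2[OF U y]] uinv_right[OF U x] uinv_right[OF U y]
    by simp
next
  fix c x assume x: "x \<in> l2 K"
  have "(\<lambda>i. c * x i) = U (\<lambda>i. c * uinv I U x i)"
    using unitary_scale[OF U uinv_l2[OF U x]] uinv_right[OF U x] by simp
  hence "uinv I U (\<lambda>i. c * x i) = uinv I U (U (\<lambda>i. c * uinv I U x i))" by simp
  also have "\<dots> = (\<lambda>i. c * uinv I U x i)"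
    by (rule uinv_left[OF U l2_scale[OF uinv_l2[OF U x]]])
  finally show "uinv I U (\<lambda>i. c * x i) = (\<lambda>k. c * uinv I U x k)" .
qed

lemma unitary_comp: assumes U: "unitary_op I K U" and V: "unitary_op K L V"
  shows "unitary_op I L (\<lambda>f. V (U f))"
  unfolding unitary_op_def
proof (intro conjI ballI allI)
  show "(\<lambda>f. V (U f)) ` l2 I = l2 L"
  proof -
    have "(\<lambda>f. V (U f)) ` l2 I = V ` (U ` l2 I)" by (simp add: image_image)
    thus ?thesis using U V unfolding unitary_op_def by simp
  qed
next
  fix f g assume f: "f \<in> l2 I" and g: "g \<in> l2 I"
  show "V (U (\<lambda>i. f i + g i)) = (\<lambda>k. V (U f) k + V (U g) k)"
    using unitary_add[OF U f g] unitary_add[OF V unitary_l2[OF U f] unitary_l2[OF U g]] by simp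
  show "l2inner L (V (U f)) (V (U g)) = l2inner I f g"
    using unitary_inner[OF U f g] unitary_inner[OF V unitary_l2[OF U f] unitary_l2[OF U g]] by simp
next
  fix c f assume f: "f \<in> l2 I"
  show "V (U (\<lambda>i. c * f i)) = (\<lambda>k. c * V (U f) k)"
    using unitary_scale[OF U f] unitary_scale[OF V unitary_l2[OF U f]] by simp
qed

lemma unitary_id: "unitary_op I I (\<lambda>f. f)"
  by (simp add: unitary_op_def)

lemma equiv_refl: "unitarily_equiv D \<pi> \<pi>"
  unfolding unitarily_equiv_def using unitary_id by blast

lemma equiv_trans: assumes "unitarily_equiv D \<pi> \<pi>'" "unitarily_equiv D \<pi>' \<pi>''"
  shows "unitarily_equiv D \<pi> \<pi>''"
proof -
  obtain U where U: "unitary_op D D U" "\<forall>a. \<forall>f\<in>l2 D. U (\<pi> a f) = \<pi>' a (U f)"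
    using assms(1) unfolding unitarily_equiv_def by blast
  obtain V where V: "unitary_op D D V" "\<forall>a. \<forall>f\<in>l2 D. V (\<pi>' a f) = \<pi>'' a (V f)"
    using assms(2) unfolding unitarily_equiv_def by blast
  have "\<forall>a. \<forall>f\<in>l2 D. V (U (\<pi> a f)) = \<pi>'' a (V (U f))"
    using U V unitary_l2[OF U(1)] by simp
  thus ?thesis unfolding unitarily_equiv_def using unitary_comp[OF U(1) V(1)] by blast
qed

lemma equiv_sym: assumes "unitarily_equiv D \<pi> \<pi>'" and cl: "\<And>a f. f \<in> l2 D \<Longrightarrow> \<pi> a f \<in> l2 D"
  shows "unitarily_equiv D \<pi>' \<pi>"
proof -
  obtain U where U: "unitary_op D D U" "\<forall>a. \<forall>f\<in>l2 D. U (\<pi> a f) = \<pi>' a (U f)"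
    using assms(1) unfolding unitarily_equiv_def by blast
  have "\<forall>a. \<forall>g\<in>l2 D. uinv D U (\<pi>' a g) = \<pi> a (uinv D U g)"
  proof (intro allI ballI)
    fix a g assume g: "g \<in> l2 D"
    have "U (\<pi> a (uinv D U g)) = \<pi>' a (U (uinv D U g))"
      using U(2) uinv_l2[OF U(1) g] by blast
    hence "\<pi>' a g = U (\<pi> a (uinv D U g))" using uinv_right[OF U(1) g] by simp
    thus "uinv D U (\<pi>' a g) = \<pi> a (uinv D U g)"
      using uinv_left[OF U(1) cl[OF uinv_l2[OF U(1) g]]] by simp
  qed
  thus ?thesis unfolding unitarily_equiv_def using unitary_uinv[OF U(1)] by blast
qed


lemma conj_railway:
  assumes R: "\<pi> \<in> railway smul st D" and U: "unitary_op D D U"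
  shows "(\<lambda>b f. if f \<in> l2 D then uinv D U (\<pi> b (U f)) else (\<lambda>i. 0)) \<in> railway smul st D \<and>
         unitarily_equiv D (\<lambda>b f. if f \<in> l2 D then uinv D U (\<pi> b (U f)) else (\<lambda>i. 0)) \<pi>"
proof -
  define W where "W = uinv D U"
  define \<pi>' where "\<pi>' = (\<lambda>b f. if f \<in> l2 D then W (\<pi> b (U f)) else (\<lambda>i. 0))"
  have Wu: "unitary_op D D W" unfolding W_def by (rule unitary_uinv[OF U])
  have UW: "\<And>x. x \<in> l2 D \<Longrightarrow> U (W x) = x" unfolding W_def by (rule uinv_right[OF U])
  have WU: "\<And>f. f \<in> l2 D \<Longrightarrow> W (U f) = f" unfolding W_def by (rule uinv_left[OF U])
  have rep: "is_rep smul st D \<pi>" using R by (simp add: railway_def)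
  have bo: "\<And>b. bounded_op D (\<pi> b)" using rep by (simp add: is_rep_def)
  have P1: "\<And>b f. f \<in> l2 D \<Longrightarrow> \<pi> b f \<in> l2 D" using bo by (simp add: bounded_op_def)
  have P2: "\<And>b f g. f \<in> l2 D \<Longrightarrow> g \<in> l2 D \<Longrightarrow> \<pi> b (\<lambda>i. f i + g i) = (\<lambda>i. \<pi> b f i + \<pi> b g i)"
    using bo by (simp add: bounded_op_def)
  have P3: "\<And>b c f. f \<in> l2 D \<Longrightarrow> \<pi> b (\<lambda>i. c * f i) = (\<lambda>i. c * \<pi> b f i)"
    using bo by (simp add: bounded_op_def)
  have P4: "\<And>b. \<exists>C. \<forall>f\<in>l2 D. l2norm D (\<pi> b f) \<le> C * l2norm D f"
    using bo by (simp add: bounded_op_def)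
  have R1: "\<And>a b f. f \<in> l2 D \<Longrightarrow> \<pi> (a + b) f = (\<lambda>i. \<pi> a f i + \<pi> b f i)"
    using rep by (simp add: is_rep_def)
  have R2: "\<And>c a f. f \<in> l2 D \<Longrightarrow> \<pi> (smul c a) f = (\<lambda>i. c * \<pi> a f i)"
    using rep by (simp add: is_rep_def)
  have R3: "\<And>a b f. f \<in> l2 D \<Longrightarrow> \<pi> (a * b) f = \<pi> a (\<pi> b f)"
    using rep by (simp add: is_rep_def)
  have R4: "\<And>a f g. f \<in> l2 D \<Longrightarrow> g \<in> l2 D \<Longrightarrow> l2inner D (\<pi> (st a) f) g = l2inner D f (\<pi> a g)"
    using rep by (simp add: is_rep_def)
  have Ul2: "\<And>f. f \<in> l2 D \<Longrightarrow> U f \<in> l2 D" by (rule unitary_l2[OF U])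
  have Wl2: "\<And>f. f \<in> l2 D \<Longrightarrow> W f \<in> l2 D" by (rule unitary_l2[OF Wu])
  have pl2: "\<And>b f. f \<in> l2 D \<Longrightarrow> \<pi>' b f \<in> l2 D"
    by (simp add: \<pi>'_def Wl2 P1 Ul2)
  have pdef: "\<And>b f. f \<in> l2 D \<Longrightarrow> \<pi>' b f = W (\<pi> b (U f))" by (simp add: \<pi>'_def)
  have bo': "bounded_op D (\<pi>' b)" for b
    unfolding bounded_op_def
  proof (intro conjI ballI allI impI)
    fix f assume f: "f \<in> l2 D" thus "\<pi>' b f \<in> l2 D" by (rule pl2)
  next
    fix f assume "f \<notin> l2 D" thus "\<pi>' b f = (\<lambda>i. 0)" by (simp add: \<pi>'_def)
  next
    fix f g assume f: "f \<in> l2 D" and g: "g \<in> l2 D"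
    have "\<pi>' b (\<lambda>i. f i + g i) = W (\<pi> b (U (\<lambda>i. f i + g i)))" by (rule pdef[OF l2_add[OF f g]])
    also have "\<dots> = W (\<lambda>i. \<pi> b (U f) i + \<pi> b (U g) i)"
      using unitary_add[OF U f g] P2[OF Ul2[OF f] Ul2[OF g]] by simp
    also have "\<dots> = (\<lambda>i. \<pi>' b f i + \<pi>' b g i)"
      using unitary_add[OF Wu P1[OF Ul2[OF f]] P1[OF Ul2[OF g]]] pdef[OF f] pdef[OF g] by simp
    finally show "\<pi>' b (\<lambda>i. f i + g i) = (\<lambda>i. \<pi>' b f i + \<pi>' b g i)" .
  next
    fix c f assume f: "f \<in> l2 D"
    have "\<pi>' b (\<lambda>i. c * f i) = W (\<pi> b (U (\<lambda>i. c * f i)))" by (rule pdef[OF l2_scale[OF f]])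
    also have "\<dots> = W (\<lambda>i. c * \<pi> b (U f) i)"
      using unitary_scale[OF U f] P3[OF Ul2[OF f]] by simp
    also have "\<dots> = (\<lambda>i. c * \<pi>' b f i)"
      using unitary_scale[OF Wu P1[OF Ul2[OF f]]] pdef[OF f] by simp
    finally show "\<pi>' b (\<lambda>i. c * f i) = (\<lambda>i. c * \<pi>' b f i)" .
  next
    obtain C where C: "\<forall>f\<in>l2 D. l2norm D (\<pi> b f) \<le> C * l2norm D f" using P4 by blast
    show "\<exists>C. \<forall>f\<in>l2 D. l2norm D (\<pi>' b f) \<le> C * l2norm D f"
    proof (intro exI ballI)
      fix f assume f: "f \<in> l2 D"
      have "l2norm D (\<pi>' b f) = l2norm D (\<pi> b (U f))"
        using pdef[OF f] unitary_norm[OF Wu P1[OF Ul2[OF f]]] by simp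
      also have "\<dots> \<le> C * l2norm D (U f)" using C Ul2[OF f] by blast
      also have "\<dots> = C * l2norm D f" using unitary_norm[OF U f] by simp
      finally show "l2norm D (\<pi>' b f) \<le> C * l2norm D f" .
    qed
  qed
  have rep': "is_rep smul st D \<pi>'"
    unfolding is_rep_def
  proof (intro conjI ballI allI)
    fix a show "bounded_op D (\<pi>' a)" by (rule bo')
  next
    fix a b f assume f: "f \<in> l2 D"
    show "\<pi>' (a + b) f = (\<lambda>i. \<pi>' a f i + \<pi>' b f i)"
      using pdef[OF f] R1[OF Ul2[OF f]] unitary_add[OF Wu P1[OF Ul2[OF f]] P1[OF Ul2[OF f]]] by simp
  next
    fix c a f assume f: "f \<in> l2 D"
    show "\<pi>' (smul c a) f = (\<lambda>i. c * \<pi>' a f i)"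
      using pdef[OF f] R2[OF Ul2[OF f]] unitary_scale[OF Wu P1[OF Ul2[OF f]]] by simp
  next
    fix a b f assume f: "f \<in> l2 D"
    have "\<pi>' a (\<pi>' b f) = W (\<pi> a (U (W (\<pi> b (U f)))))"
      using pdef[OF pl2[OF f]] pdef[OF f] by simp
    also have "\<dots> = W (\<pi> a (\<pi> b (U f)))" using UW[OF P1[OF Ul2[OF f]]] by simp
    also have "\<dots> = \<pi>' (a * b) f" using pdef[OF f] R3[OF Ul2[OF f]] by simp
    finally show "\<pi>' (a * b) f = \<pi>' a (\<pi>' b f)" by simp
  next
    fix a f g assume f: "f \<in> l2 D" and g: "g \<in> l2 D"
    have "l2inner D (\<pi>' (st a) f) g = l2inner D (W (\<pi> (st a) (U f))) (W (U g))"
      using pdef[OF f] WU[OF g] by simp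
    also have "\<dots> = l2inner D (\<pi> (st a) (U f)) (U g)"
      by (rule unitary_inner[OF Wu P1[OF Ul2[OF f]] Ul2[OF g]])
    also have "\<dots> = l2inner D (U f) (\<pi> a (U g))" by (rule R4[OF Ul2[OF f] Ul2[OF g]])
    also have "\<dots> = l2inner D (W (U f)) (W (\<pi> a (U g)))"
      by (rule unitary_inner[OF Wu Ul2[OF f] P1[OF Ul2[OF g]], symmetric])
    also have "\<dots> = l2inner D f (\<pi>' a g)" using WU[OF f] pdef[OF g] by simp
    finally show "l2inner D (\<pi>' (st a) f) g = l2inner D f (\<pi>' a g)" .
  qed
  obtain J \<sigma> and U1 :: "('a \<Rightarrow> complex) \<Rightarrow> ('a \<times> 'a \<Rightarrow> complex)" where
    J: "irreducible_rep smul st J \<sigma>" "unitary_op D (D \<times> J) U1"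
       "\<forall>a. \<forall>f\<in>l2 D. U1 (\<pi> a f) = ampliation D J \<sigma> a (U1 f)"
    using R unfolding railway_def by blast
  have "\<forall>a. \<forall>f\<in>l2 D. U1 (U (\<pi>' a f)) = ampliation D J \<sigma> a (U1 (U f))"
    using J(3) pdef UW P1 Ul2 by simp
  hence "\<pi>' \<in> railway smul st D"
    unfolding railway_def using rep' J(1) unitary_comp[OF U J(2)] by blast
  moreover have "unitarily_equiv D \<pi>' \<pi>"
    unfolding unitarily_equiv_def using U pdef UW P1 Ul2 by auto
  ultimately show ?thesis unfolding \<pi>'_def W_def by simp
qed


lemma rclass_eq:
  assumes R: "\<pi> \<in> railway smul st D" "\<pi>' \<in> railway smul st D" and e: "unitarily_equiv D \<pi>' \<pi>"
  shows "rclass smul st D \<pi> = rclass smul st D \<pi>'"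
proof -
  have cl: "\<And>a f. f \<in> l2 D \<Longrightarrow> \<pi>' a f \<in> l2 D"
    using R(2) by (simp add: railway_def is_rep_def bounded_op_def)
  have e': "unitarily_equiv D \<pi> \<pi>'" by (rule equiv_sym[OF e cl])
  show ?thesis unfolding rclass_def using equiv_trans[OF e] equiv_trans[OF e'] by blast
qed

theorem proposition4p8:
  fixes smul :: "complex \<Rightarrow> 'a::{real_normed_algebra_1,banach} \<Rightarrow> 'a"
    and st :: "'a \<Rightarrow> 'a"
    and D :: "'a set"
    and \<rho> :: "'a \<Rightarrow> ('a \<Rightarrow> complex) \<Rightarrow> ('a \<Rightarrow> complex)"
    and a :: 'a and \<xi> :: "'a \<Rightarrow> complex" and \<epsilon> :: real
  assumes "unital_cstar_algebra smul st"
    and "minimal_dense D"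
    and "\<rho> \<in> railway smul st D"
    and "\<xi> \<in> l2 D"
    and "\<epsilon> > 0"
  shows "openin_spectrum smul st D
           {rclass smul st D \<rho>' | \<rho>'. \<rho>' \<in> railway smul st D \<and>
              l2norm D (\<lambda>i. \<rho> a \<xi> i - \<rho>' a \<xi> i) < \<epsilon>}"
proof -
  let ?R = "railway smul st D"
  let ?V = "{rclass smul st D \<rho>' | \<rho>'. \<rho>' \<in> ?R \<and> l2norm D (\<lambda>i. \<rho> a \<xi> i - \<rho>' a \<xi> i) < \<epsilon>}"
  let ?S = "{\<rho>0 \<in> ?R. rclass smul st D \<rho>0 \<in> ?V}"
  have cl: "\<And>\<pi> b f. \<pi> \<in> ?R \<Longrightarrow> f \<in> l2 D \<Longrightarrow> \<pi> b f \<in> l2 D"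
    by (simp add: railway_def is_rep_def bounded_op_def)
  have "openin (railway_topology smul st D) ?S"
  proof (subst openin_subopen, intro ballI)
    fix \<rho>2 assume "\<rho>2 \<in> ?S"
    then obtain \<rho>1 where r2: "\<rho>2 \<in> ?R" and r1: "\<rho>1 \<in> ?R"
      and c1: "l2norm D (\<lambda>i. \<rho> a \<xi> i - \<rho>1 a \<xi> i) < \<epsilon>"
      and ce: "rclass smul st D \<rho>2 = rclass smul st D \<rho>1" by blast
    have "\<rho>2 \<in> rclass smul st D \<rho>2" using r2 equiv_refl by (simp add: rclass_def)
    hence "\<rho>2 \<in> rclass smul st D \<rho>1" using ce by simp
    hence "unitarily_equiv D \<rho>1 \<rho>2" by (simp add: rclass_def)
    then obtain U where U: "unitary_op D D U" and UE: "\<forall>b. \<forall>f\<in>l2 D. U (\<rho>1 b f) = \<rho>2 b (U f)"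
      unfolding unitarily_equiv_def by blast
    define \<eta> where "\<eta> = U \<xi>"
    have \<eta>: "\<eta> \<in> l2 D" unfolding \<eta>_def by (rule unitary_l2[OF U assms(4)])
    define \<delta> where "\<delta> = \<epsilon> - l2norm D (\<lambda>i. \<rho> a \<xi> i - \<rho>1 a \<xi> i)"
    have \<delta>: "\<delta> > 0" using c1 by (simp add: \<delta>_def)
    define N where "N = {\<pi>' \<in> ?R. l2norm D (\<lambda>i. \<pi>' a \<eta> i - \<rho>2 a \<eta> i) < \<delta>}"
    show "\<exists>T. openin (railway_topology smul st D) T \<and> \<rho>2 \<in> T \<and> T \<subseteq> ?S"
    proof (intro exI conjI)
      show "openin (railway_topology smul st D) N"
        unfolding railway_topology_def
        by (rule topology_generated_by_Basis) (use r2 \<eta> \<delta> in \<open>auto simp: N_def\<close>)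
      show "\<rho>2 \<in> N" using r2 \<delta> by (simp add: N_def)
      show "N \<subseteq> ?S"
      proof
        fix \<pi> assume "\<pi> \<in> N"
        hence p: "\<pi> \<in> ?R" and pn: "l2norm D (\<lambda>i. \<pi> a \<eta> i - \<rho>2 a \<eta> i) < \<delta>"
          by (auto simp: N_def)
        define \<pi>' where "\<pi>' = (\<lambda>b f. if f \<in> l2 D then uinv D U (\<pi> b (U f)) else (\<lambda>i. 0))"
        have pp: "\<pi>' \<in> ?R" "unitarily_equiv D \<pi>' \<pi>"
          using conj_railway[OF p U] unfolding \<pi>'_def by auto
        have Wu: "unitary_op D D (uinv D U)" by (rule unitary_uinv[OF U])
        have x1: "\<pi>' a \<xi> = uinv D U (\<pi> a \<eta>)" using assms(4) by (simp add: \<pi>'_def \<eta>_def)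
        have x2: "\<rho>1 a \<xi> = uinv D U (\<rho>2 a \<eta>)"
          using UE assms(4) uinv_left[OF U cl[OF r1 assms(4)]] by (simp add: \<eta>_def)
        have "l2norm D (\<lambda>i. \<rho>1 a \<xi> i - \<pi>' a \<xi> i)
              = l2norm D (uinv D U (\<lambda>i. \<rho>2 a \<eta> i - \<pi> a \<eta> i))"
          using x1 x2 unitary_diff[OF Wu cl[OF r2 \<eta>] cl[OF p \<eta>]] by simp
        also have "\<dots> = l2norm D (\<lambda>i. \<rho>2 a \<eta> i - \<pi> a \<eta> i)"
          by (rule unitary_norm[OF Wu l2_diff[OF cl[OF r2 \<eta>] cl[OF p \<eta>]]])
        also have "\<dots> = l2norm D (\<lambda>i. \<pi> a \<eta> i - \<rho>2 a \<eta> i)" by (rule l2norm_commute)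
        finally have d2: "l2norm D (\<lambda>i. \<rho>1 a \<xi> i - \<pi>' a \<xi> i) < \<delta>" using pn by simp
        have "l2norm D (\<lambda>i. \<rho> a \<xi> i - \<pi>' a \<xi> i)
              \<le> l2norm D (\<lambda>i. \<rho> a \<xi> i - \<rho>1 a \<xi> i) + l2norm D (\<lambda>i. \<rho>1 a \<xi> i - \<pi>' a \<xi> i)"
          by (rule l2norm_triangle_diff[OF cl[OF assms(3,4)] cl[OF r1 assms(4)] cl[OF pp(1) assms(4)]])
        hence c': "l2norm D (\<lambda>i. \<rho> a \<xi> i - \<pi>' a \<xi> i) < \<epsilon>" using d2 by (simp add: \<delta>_def)
        have "rclass smul st D \<pi> = rclass smul st D \<pi>'" by (rule rclass_eq[OF p pp(1) pp(2)])
        hence "rclass smul st D \<pi> \<in> ?V" using pp(1) c' by blast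
        thus "\<pi> \<in> ?S" using p by blast
      qed
    qed
  qed
  moreover have "?V \<subseteq> rclass smul st D ` ?R" by blast
  ultimately show ?thesis unfolding openin_spectrum_def by blast
qed

end
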